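(* Let $(\Omega,\mathcal F,P)$ be a probability space and $T:\Omega\to\Omega$ an invertible measurable transformation preserving $P$ such that $(\Omega,\mathcal F,P,T)$ is ergodic. Let $\mathcal S$ be a countable set and $(\psi_j)_{j\in\mathcal S}$ affine maps $\psi_j(y)=\beta_j+\rho_j y$ of $\mathbb R$ which are all strict contractions ($0<\rho_j<1$). Let $\epsilon:\Omega\to\mathcal S$ be measurable with $P(\epsilon=j)>0$ for all $j\in\mathcal S$, write $b(\omega)=\beta_{\epsilon(\omega)}$, $r(\omega)=\rho_{\epsilon(\omega)}$, and assume $b\in L^1(P)$, $\log r\in L^1(P)$. Let $r_0=1$, $r_n(\omega)=r(\omega)\cdots r(T^{n-1}\omega)$, $X(\omega)=\sum_{n\ge0}r_n(\omega)b(T^n\omega)$, and let $P_X$ be the law of $X$. For a multi-index $i=(i_0,\dots,i_{n-1})\in\mathcal S^n$, $n\ge1$, write $\psi_i=\psi_{i_0}\circ\cdots\circ\psi_{i_{n-1}}$ and $fix(\psi_i)$ for its unique fixed point. Call $i$ minimal if $P\big(\epsilon(\omega)=i_0,\epsilon(T\omega)=i_1,\dots,\epsilon(T^{n-1}\omega)=i_{n-1}\big)>0$ and for every strict prefix $j=(i_0,\dots,i_{m-1})$, $1\le m<n$, of $i$, $fix(\psi_j)\ne fix(\psi_i)$. Let $\mathcal M$ be the set of minimal multi-indices. Suppose the map $\mathcal M\to\mathbb R$, $i\mapsto fix(\psi_i)$, is injective. Then either $P_X$ is continuous, or there exist $N\ge1$ and $(i_0,\dots,i_{N-1})\in\mathcal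 S^N$ such that for $P$-a.e. $\omega$ the sequence $(\epsilon(T^n\omega))_{n\ge0}$ is a left shift of the periodic sequence $(i_0,\dots,i_{N-1},i_0,\dots,i_{N-1},\dots)\in\mathcal S^{\mathbb N}$; in the latter case, up to a $P$-null set, $X(\Omega)=\{\psi_{i_k}\circ\cdots\circ\psi_{i_{N-1}}(c):0\le k<N\}$, where $c=fix(\psi_{i_0}\circ\cdots\circ\psi_{i_{N-1}})$.
   Context: $P_X$ is continuous means it has no atoms. A left shift of a sequence $(u_n)_{n\ge0}$ is a sequence $(u_{n+k})_{n\ge0}$ for some $k\ge0$. *)

theory Defs
  imports "HOL-Probability.Probability"
begin

definition invertible_mpt :: "'a measure \<Rightarrow> ('a \<Rightarrow> 'a) \<Rightarrow> bool" where
  "invertible_mpt M T \<longleftrightarrow>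
     T \<in> measurable M M \<and> bij_betw T (space M) (space M) \<and>
     the_inv_into (space M) T \<in> measurable M M \<and> distr M M T = M"

definition ergodic :: "'a measure \<Rightarrow> ('a \<Rightarrow> 'a) \<Rightarrow> bool" where
  "ergodic M T \<longleftrightarrow>
     (\<forall>A\<in>sets M. T -` A \<inter> space M = A \<longrightarrow> measure M A = 0 \<or> measure M A = 1)"

fun psi_comp :: "('s \<Rightarrow> real) \<Rightarrow> ('s \<Rightarrow> real) \<Rightarrow> 's list \<Rightarrow> real \<Rightarrow> real" where
  "psi_comp beta rho [] = id"
| "psi_comp beta rho (j # js) = (\<lambda>y. beta j + rho j * y) \<circ> psi_comp beta rho js"

definition fixp :: "(real \<Rightarrow> real) \<Rightarrow> real" where
  "fixp f = (THE y. f y = y)"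

definition minimal_idx ::
  "'a measure \<Rightarrow> ('a \<Rightarrow> 'a) \<Rightarrow> ('a \<Rightarrow> 's) \<Rightarrow> 's set \<Rightarrow> ('s \<Rightarrow> real) \<Rightarrow> ('s \<Rightarrow> real) \<Rightarrow> 's list \<Rightarrow> bool" where
  "minimal_idx M T eps S beta rho i \<longleftrightarrow>
     length i \<ge> 1 \<and> set i \<subseteq> S \<and>
     measure M {\<omega> \<in> space M. \<forall>k < length i. eps ((T ^^ k) \<omega>) = i ! k} > 0 \<and>
     (\<forall>m. 1 \<le> m \<and> m < length i \<longrightarrow>
        fixp (psi_comp beta rho (take m i)) \<noteq> fixp (psi_comp beta rho i))"

definition periodic_coding ::
  "'a measure \<Rightarrow> ('a \<Rightarrow> 'a) \<Rightarrow> ('a \<Rightarrow> 's) \<Rightarrow> 's set \<Rightarrow> nat \<Rightarrow> 's list \<Rightarrow> bool" where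
  "periodic_coding M T eps S N is \<longleftrightarrow>
     N \<ge> 1 \<and> length is = N \<and> set is \<subseteq> S \<and>
     (AE \<omega> in M. \<exists>k. \<forall>n. eps ((T ^^ n) \<omega>) = is ! ((n + k) mod N))"

end

theory Submission
  imports Defs
begin


locale ifs =
  fixes M :: "'a measure" and T :: "'a \<Rightarrow> 'a" and S :: "'s set"
    and beta rho :: "'s \<Rightarrow> real" and eps :: "'a \<Rightarrow> 's"
  assumes probM: "prob_space M"
    and Tmeas: "T \<in> M \<rightarrow>\<^sub>M M"
    and Tdistr: "distr M M T = M"
    and erg: "ergodic M T"
    and cS: "countable S"
    and rhoS: "\<And>j. j \<in> S \<Longrightarrow> 0 < rho j \<and> rho j < 1"
    and epsm: "eps \<in> M \<rightarrow>\<^sub>M count_space S"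
    and bint: "integrable M (\<lambda>\<omega>. beta (eps \<omega>))"
    and lint: "integrable M (\<lambda>\<omega>. ln (rho (eps \<omega>)))"
begin

sublocale prob_space M by (rule probM)

lemma Tn_meas[measurable]: "(T ^^ n) \<in> M \<rightarrow>\<^sub>M M"
  by (induction n) (auto intro: measurable_compose[OF _ Tmeas])

lemma Tn_space: "\<omega> \<in> space M \<Longrightarrow> (T ^^ n) \<omega> \<in> space M"
  using measurable_space[OF Tn_meas] by blast

lemma T_space: "\<omega> \<in> space M \<Longrightarrow> T \<omega> \<in> space M"
  using measurable_space[OF Tmeas] by blast

lemma Tn_distr: "distr M M (T ^^ n) = M"
proof (induction n)
  case 0 then show ?case by simp
next
  case (Suc n)
  have "distr M M (T ^^ Suc n) = distr M M ((T ^^ n) \<circ> T)" by (simp only: funpow_Suc_right)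
  also have "\<dots> = distr (distr M M T) M (T ^^ n)"
    by (rule distr_distr[symmetric]) (auto intro: Tmeas)
  also have "\<dots> = M" using Suc Tdistr by simp
  finally show ?case .
qed

lemma measure_Tn: "A \<in> sets M \<Longrightarrow> measure M ((T ^^ n) -` A \<inter> space M) = measure M A"
  using measure_distr[OF Tn_meas, of A n] Tn_distr[of n] by simp

lemma integral_Tn:
  fixes f :: "'a \<Rightarrow> real"
  assumes "integrable M f"
  shows "integrable M (\<lambda>\<omega>. f ((T ^^ n) \<omega>))" "integral\<^sup>L M (\<lambda>\<omega>. f ((T ^^ n) \<omega>)) = integral\<^sup>L M f"
proof -
  have fm: "f \<in> borel_measurable M" using assms by auto
  have "integrable (distr M M (T ^^ n)) f" using assms Tn_distr by simp
  then show "integrable M (\<lambda>\<omega>. f ((T ^^ n) \<omega>))"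
    using integrable_distr_eq[OF Tn_meas fm] by simp
  show "integral\<^sup>L M (\<lambda>\<omega>. f ((T ^^ n) \<omega>)) = integral\<^sup>L M f"
    using integral_distr[OF Tn_meas fm] Tn_distr by simp
qed

lemma eps_space: "\<omega> \<in> space M \<Longrightarrow> eps \<omega> \<in> S"
  using measurable_space[OF epsm] by auto

lemma eps_pred[measurable]: "Measurable.pred M (\<lambda>\<omega>. eps ((T ^^ k) \<omega>) = c)"
proof -
  have "{\<omega> \<in> space M. eps ((T ^^ k) \<omega>) = c} = (eps \<circ> (T ^^ k)) -` {c} \<inter> space M" by auto
  also have "\<dots> \<in> sets M"
  proof (cases "c \<in> S")
    case True
    then show ?thesis using measurable_sets[OF measurable_comp[OF Tn_meas epsm], of "{c}"] by auto
  next
    case False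
    then have "(eps \<circ> (T ^^ k)) -` {c} \<inter> space M = {}" using eps_space Tn_space by auto
    then show ?thesis by simp
  qed
  finally show ?thesis unfolding pred_def .
qed

lemma rhoeps_meas[measurable]: "(\<lambda>\<omega>. g (eps \<omega>) :: real) \<in> borel_measurable M"
  using measurable_comp[OF epsm, of "\<lambda>j. g j" borel] by (simp add: o_def)

end

context ifs begin

definition Sn :: "('a \<Rightarrow> real) \<Rightarrow> nat \<Rightarrow> 'a \<Rightarrow> real" where
  "Sn h n \<omega> = (\<Sum>k<n. h ((T ^^ k) \<omega>))"

lemma Sn_0[simp]: "Sn h 0 \<omega> = 0" by (simp add: Sn_def)

lemma Sn_Suc: "Sn h (Suc n) \<omega> = h \<omega> + Sn h n (T \<omega>)"
  unfolding Sn_def by (subst sum.lessThan_Suc_shift) (simp add: funpow_Suc_right del: funpow.simps)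

fun mx :: "('a \<Rightarrow> real) \<Rightarrow> nat \<Rightarrow> 'a \<Rightarrow> real" where
  "mx h 0 \<omega> = 0"
| "mx h (Suc n) \<omega> = max (mx h n \<omega>) (Sn h (Suc n) \<omega>)"

lemma mx_nonneg: "0 \<le> mx h n \<omega>"
  by (induction n) auto

lemma mx_ge: "k \<le> n \<Longrightarrow> Sn h k \<omega> \<le> mx h n \<omega>"
proof (induction n)
  case 0 then show ?case by simp
next
  case (Suc n)
  then show ?case by (cases "k = Suc n") auto
qed

lemma mx_pos: "0 < mx h n \<omega> \<Longrightarrow> \<exists>k. 1 \<le> k \<and> k \<le> n \<and> mx h n \<omega> = Sn h k \<omega>"
proof (induction n)
  case 0 then show ?case by simp
next
  case (Suc n)
  show ?case
  proof (cases "Sn h (Suc n) \<omega> \<le> mx h n \<omega>")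
    case True
    then have "mx h (Suc n) \<omega> = mx h n \<omega>" by simp
    then show ?thesis using Suc by (metis le_SucI)
  next
    case False
    then show ?thesis by (intro exI[of _ "Suc n"]) auto
  qed
qed

lemma mx_key: "0 < mx h n \<omega> \<Longrightarrow> mx h n \<omega> \<le> h \<omega> + mx h n (T \<omega>)"
proof -
  assume "0 < mx h n \<omega>"
  then obtain k where k: "1 \<le> k" "k \<le> n" "mx h n \<omega> = Sn h k \<omega>" using mx_pos by blast
  then obtain k' where k': "k = Suc k'" by (cases k) auto
  have "Sn h k' (T \<omega>) \<le> mx h n (T \<omega>)" using k k' by (intro mx_ge) auto
  then show ?thesis using k k' Sn_Suc by simp
qed

lemma Sn_int: assumes "integrable M h" shows "integrable M (Sn h n)"
  unfolding Sn_def[abs_def] using integral_Tn(1)[OF assms] by simp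

lemma mx_int: "integrable M h \<Longrightarrow> integrable M (mx h n)"
proof (induction n)
  case 0
  have "mx h 0 = (\<lambda>\<omega>. 0)" by auto
  then show ?case by simp
next
  case (Suc n)
  have "mx h (Suc n) = (\<lambda>\<omega>. max (mx h n \<omega>) (Sn h (Suc n) \<omega>))" by auto
  then show ?case using Suc Sn_int by simp
qed

lemma maximal_ergodic:
  assumes h: "integrable M h"
  shows "0 \<le> (\<integral>\<omega>. indicator {\<omega> \<in> space M. 0 < mx h n \<omega>} \<omega> * h \<omega> \<partial>M)"
proof -
  have mxi: "integrable M (mx h n)" using mx_int[OF h] .
  then have [measurable]: "mx h n \<in> borel_measurable M" by auto
  have mxTi: "integrable M (\<lambda>\<omega>. mx h n (T \<omega>))" using integral_Tn(1)[OF mxi, of 1] by simp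
  have mxTe: "(\<integral>\<omega>. mx h n (T \<omega>) \<partial>M) = (\<integral>\<omega>. mx h n \<omega> \<partial>M)"
    using integral_Tn(2)[OF mxi, of 1] by simp
  have A: "{\<omega> \<in> space M. 0 < mx h n \<omega>} \<in> sets M" by measurable
  have "0 = (\<integral>\<omega>. mx h n \<omega> - mx h n (T \<omega>) \<partial>M)"
    using mxTe mxi mxTi by simp
  also have "\<dots> \<le> (\<integral>\<omega>. indicator {\<omega> \<in> space M. 0 < mx h n \<omega>} \<omega> * h \<omega> \<partial>M)"
  proof (rule integral_mono)
    show "integrable M (\<lambda>\<omega>. mx h n \<omega> - mx h n (T \<omega>))" using mxi mxTi by simp
    show "integrable M (\<lambda>\<omega>. indicator {\<omega> \<in> space M. 0 < mx h n \<omega>} \<omega> * h \<omega>)"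
      using integrable_mult_indicator[OF A h] by simp
    fix \<omega> assume "\<omega> \<in> space M"
    show "mx h n \<omega> - mx h n (T \<omega>) \<le> indicator {\<omega> \<in> space M. 0 < mx h n \<omega>} \<omega> * h \<omega>"
    proof (cases "0 < mx h n \<omega>")
      case True
      then show ?thesis using mx_key[OF True] \<open>\<omega> \<in> space M\<close> by simp
    next
      case False
      then show ?thesis using mx_nonneg[of h n \<omega>] mx_nonneg[of h n "T \<omega>"] by simp
    qed
  qed
  finally show ?thesis .
qed

lemma ergodic_neg:
  assumes h: "integrable M h" and neg: "integral\<^sup>L M h < 0"
    and D: "D \<in> sets M" and inv: "\<And>\<omega>. \<omega> \<in> space M \<Longrightarrow> T \<omega> \<in> D \<longleftrightarrow> \<omega> \<in> D"
    and pos: "\<And>\<omega>. \<omega> \<in> D \<Longrightarrow> \<exists>n. Sn h n \<omega> > 0"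
  shows "measure M D = 0"
proof (rule ccontr)
  assume nz: "measure M D \<noteq> 0"
  have Dsp: "D \<subseteq> space M" using D sets.sets_into_space by auto
  have "T -` D \<inter> space M = D" using inv Dsp by auto
  then have "measure M D = 1" using erg D nz unfolding ergodic_def by auto
  then have ae: "AE \<omega> in M. \<omega> \<in> D" using AE_prob_1 by simp
  have hm[measurable]: "h \<in> borel_measurable M" using h by auto
  have mxm[measurable]: "\<And>n. mx h n \<in> borel_measurable M" using mx_int[OF h] by auto
  define s where "s n \<omega> = indicator {\<omega> \<in> space M. 0 < mx h n \<omega>} \<omega> * h \<omega>" for n \<omega>
  have "(\<lambda>n. integral\<^sup>L M (s n)) \<longlonglongrightarrow> integral\<^sup>L M h"
  proof (rule integral_dominated_convergence[where w="\<lambda>\<omega>. norm (h \<omega>)"])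
    show "h \<in> borel_measurable M" by simp
    show "\<And>n. s n \<in> borel_measurable M" unfolding s_def by measurable
    show "integrable M (\<lambda>\<omega>. norm (h \<omega>))" using h by simp
    show "AE \<omega> in M. (\<lambda>n. s n \<omega>) \<longlonglongrightarrow> h \<omega>"
      using ae
    proof (rule AE_mp, intro AE_I2 impI)
      fix \<omega> assume sp: "\<omega> \<in> space M" and "\<omega> \<in> D"
      then obtain n0 where n0: "Sn h n0 \<omega> > 0" using pos by blast
      have "eventually (\<lambda>n. s n \<omega> = h \<omega>) sequentially"
      proof (rule eventually_sequentiallyI[of n0])
        fix n assume "n0 \<le> n"
        then have "0 < mx h n \<omega>" using mx_ge[of n0 n h \<omega>] n0 by simp
        then show "s n \<omega> = h \<omega>" using sp unfolding s_def by simp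
      qed
      then show "(\<lambda>n. s n \<omega>) \<longlonglongrightarrow> h \<omega>" by (rule tendsto_eventually)
    qed
    show "\<And>n. AE \<omega> in M. norm (s n \<omega>) \<le> norm (h \<omega>)"
      unfolding s_def by (auto simp: indicator_def)
  qed
  moreover have "\<And>n. 0 \<le> integral\<^sup>L M (s n)" unfolding s_def using maximal_ergodic[OF h] by simp
  ultimately have "0 \<le> integral\<^sup>L M h" by (meson LIMSEQ_le_const)
  then show False using neg by simp
qed

end

context ifs begin

lemma Sn_meas[measurable]: assumes [measurable]: "h \<in> borel_measurable M" shows "Sn h n \<in> borel_measurable M"
  unfolding Sn_def[abs_def] by measurable

lemma ergodic_bdd:
  assumes h: "integrable M h" and neg: "integral\<^sup>L M h < 0"
  shows "AE \<omega> in M. \<exists>C. \<forall>n. Sn h n \<omega> \<le> C"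
proof -
  have hm[measurable]: "h \<in> borel_measurable M" using h by auto
  define D where "D = {\<omega> \<in> space M. \<forall>C::nat. \<exists>n. Sn h n \<omega> > real C}"
  have Dm: "D \<in> sets M" unfolding D_def by measurable
  have inv: "T \<omega> \<in> D \<longleftrightarrow> \<omega> \<in> D" if sp: "\<omega> \<in> space M" for \<omega>
  proof
    assume "T \<omega> \<in> D"
    then have a: "\<forall>C::nat. \<exists>n. Sn h n (T \<omega>) > real C" unfolding D_def by auto
    have "\<exists>n. Sn h n \<omega> > real C" for C :: nat
    proof -
      obtain n where "Sn h n (T \<omega>) > real (nat \<lceil>real C + \<bar>h \<omega>\<bar>\<rceil>)" using a by blast
      then have "Sn h n (T \<omega>) > real C + \<bar>h \<omega>\<bar>" by linarith
      then have "Sn h (Suc n) \<omega> > real C" using Sn_Suc[of h n \<omega>] by linarith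
      then show ?thesis by blast
    qed
    then show "\<omega> \<in> D" using sp unfolding D_def by auto
  next
    assume "\<omega> \<in> D"
    then have a: "\<forall>C::nat. \<exists>n. Sn h n \<omega> > real C" unfolding D_def by auto
    have "\<exists>n. Sn h n (T \<omega>) > real C" for C :: nat
    proof -
      obtain n where n: "Sn h n \<omega> > real (nat \<lceil>real C + \<bar>h \<omega>\<bar>\<rceil>)" using a by blast
      then have n': "Sn h n \<omega> > real C + \<bar>h \<omega>\<bar>" by linarith
      have "0 \<le> real C + \<bar>h \<omega>\<bar>" by simp
      then have "n \<noteq> 0" using n' by (cases n) auto
      then obtain m where "n = Suc m" by (cases n) auto
      then have "Sn h (Suc m) \<omega> > real C + \<bar>h \<omega>\<bar>" using n' by simp
      then have "Sn h m (T \<omega>) > real C" using Sn_Suc[of h m \<omega>] by linarith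
      then show ?thesis by blast
    qed
    then show "T \<omega> \<in> D" using T_space[OF sp] unfolding D_def by auto
  qed
  have "measure M D = 0"
  proof (rule ergodic_neg[OF h neg Dm inv])
    fix \<omega> assume "\<omega> \<in> D"
    then have "\<forall>C::nat. \<exists>n. Sn h n \<omega> > real C" unfolding D_def by blast
    then obtain n where "Sn h n \<omega> > real (0::nat)" by blast
    then show "\<exists>n. Sn h n \<omega> > 0" by auto
  qed
  then have "D \<in> null_sets M" using Dm by (simp add: null_sets_def emeasure_eq_measure)
  then have "AE \<omega> in M. \<omega> \<notin> D" using AE_iff_null_sets[OF Dm] by simp
  then show ?thesis
  proof (rule AE_mp, intro AE_I2 impI)
    fix \<omega> assume "\<omega> \<in> space M" "\<omega> \<notin> D"
    then obtain C :: nat where "\<forall>n. \<not> Sn h n \<omega> > real C" unfolding D_def by auto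
    then show "\<exists>C. \<forall>n. Sn h n \<omega> \<le> C" by (meson not_less)
  qed
qed

definition rr :: "nat \<Rightarrow> 'a \<Rightarrow> real" where
  "rr n \<omega> = (\<Prod>k<n. rho (eps ((T ^^ k) \<omega>)))"
definition tm :: "nat \<Rightarrow> 'a \<Rightarrow> real" where
  "tm n \<omega> = rr n \<omega> * beta (eps ((T ^^ n) \<omega>))"
definition XX :: "'a \<Rightarrow> real" where
  "XX \<omega> = (\<Sum>n. tm n \<omega>)"

lemma rho_pos: "\<omega> \<in> space M \<Longrightarrow> 0 < rho (eps \<omega>)" using rhoS eps_space by blast
lemma rho_lt1: "\<omega> \<in> space M \<Longrightarrow> rho (eps \<omega>) < 1" using rhoS eps_space by blast

lemma eps_Tn_meas[measurable]: "(\<lambda>\<omega>. g (eps ((T ^^ k) \<omega>)) :: real) \<in> borel_measurable M"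
  using measurable_compose[OF Tn_meas rhoeps_meas] .

lemma tm_meas[measurable]: "tm n \<in> borel_measurable M"
  unfolding tm_def[abs_def] rr_def by measurable

lemma XX_meas[measurable]: "XX \<in> borel_measurable M"
  unfolding XX_def[abs_def] by measurable

lemma rr_decay: "\<exists>q. 0 < q \<and> q < 1 \<and> (AE \<omega> in M. \<exists>C. \<forall>n. rr n \<omega> \<le> C * q ^ n)"
proof -
  define f where "f \<omega> = - ln (rho (eps \<omega>))" for \<omega>
  have fi: "integrable M f" unfolding f_def using lint by simp
  have fpos: "\<omega> \<in> space M \<Longrightarrow> 0 < f \<omega>" for \<omega>
    unfolding f_def using rho_pos rho_lt1 by simp
  define \<mu> where "\<mu> = integral\<^sup>L M f"
  have "0 \<le> \<mu>" unfolding \<mu>_def using fpos by (intro integral_nonneg_AE) (auto intro!: less_imp_le)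
  moreover have "\<mu> \<noteq> 0"
  proof
    assume "\<mu> = 0"
    then have "AE \<omega> in M. f \<omega> = 0" unfolding \<mu>_def
      using integral_nonneg_eq_0_iff_AE[OF fi] fpos by (auto intro!: less_imp_le)
    then have "AE \<omega> in M. False" by (rule AE_mp) (auto intro!: AE_I2 dest: fpos)
    then show False using AE_False prob_space_axioms by (simp add: prob_space.not_empty)
  qed
  ultimately have mu: "0 < \<mu>" by simp
  define h where "h \<omega> = \<mu> / 2 - f \<omega>" for \<omega>
  have hi: "integrable M h" unfolding h_def using fi by simp
  have "integral\<^sup>L M h = \<mu> / 2 - \<mu>" unfolding h_def \<mu>_def using fi by (simp add: prob_space)
  then have "integral\<^sup>L M h < 0" using mu by simp
  then have ae: "AE \<omega> in M. \<exists>C. \<forall>n. Sn h n \<omega> \<le> C" using ergodic_bdd[OF hi] by simp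
  define q where "q = exp (- \<mu> / 2)"
  have q: "0 < q" "q < 1" unfolding q_def using mu by auto
  have "AE \<omega> in M. \<exists>C. \<forall>n. rr n \<omega> \<le> C * q ^ n"
    using ae
  proof (rule AE_mp, intro AE_I2 impI)
    fix \<omega> assume sp: "\<omega> \<in> space M" and "\<exists>C. \<forall>n. Sn h n \<omega> \<le> C"
    then obtain C where C: "\<And>n. Sn h n \<omega> \<le> C" by blast
    have "rr n \<omega> \<le> exp C * q ^ n" for n
    proof -
      have sm: "(\<Sum>k<n. ln (rho (eps ((T ^^ k) \<omega>)))) = Sn h n \<omega> - real n * (\<mu> / 2)"
        unfolding Sn_def h_def f_def by (simp add: sum.distrib)
      have A: "q ^ n = exp (real n * (- \<mu> / 2))" unfolding q_def by (simp only: exp_of_nat_mult)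
      have e: "Sn h n \<omega> - real n * (\<mu> / 2) = Sn h n \<omega> + real n * (- \<mu> / 2)" by simp
      have "rr n \<omega> = (\<Prod>k<n. exp (ln (rho (eps ((T ^^ k) \<omega>)))))"
        unfolding rr_def using rho_pos[OF Tn_space[OF sp]] by (intro prod.cong) auto
      also have "\<dots> = exp (\<Sum>k<n. ln (rho (eps ((T ^^ k) \<omega>))))" by (simp add: exp_sum)
      also have "\<dots> = exp (Sn h n \<omega>) * q ^ n"
        by (simp only: sm e A exp_add)
      also have "\<dots> \<le> exp C * q ^ n" using C[of n] q by (intro mult_right_mono) auto
      finally show ?thesis .
    qed
    then show "\<exists>C. \<forall>n. rr n \<omega> \<le> C * q ^ n" by blast
  qed
  then show ?thesis using q by blast
qed

end


lemma psi_append: "psi_comp beta rho (xs @ ys) = psi_comp beta rho xs \<circ> psi_comp beta rho ys"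
  by (induction xs) auto

lemma psi_Cons_apply: "psi_comp beta rho (j # js) y = beta j + rho j * psi_comp beta rho js y"
  by simp

context ifs begin

lemma psi_diff: "psi_comp beta rho w y - psi_comp beta rho w z = prod_list (map rho w) * (y - z)"
proof (induction w)
  case Nil then show ?case by simp
next
  case (Cons a w)
  have "psi_comp beta rho (a # w) y - psi_comp beta rho (a # w) z = rho a * (psi_comp beta rho w y - psi_comp beta rho w z)"
    by (simp add: algebra_simps)
  then show ?case using Cons.IH by simp
qed

lemma prod_rho_bounds:
  assumes "set w \<subseteq> S"
  shows "0 < prod_list (map rho w) \<and> prod_list (map rho w) \<le> 1 \<and> (w \<noteq> [] \<longrightarrow> prod_list (map rho w) < 1)"
  using assms(1)
proof (induction w)
  case Nil then show ?case by simp
next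
  case (Cons j w)
  then have j: "0 < rho j" "rho j < 1" using rhoS by auto
  from Cons have IH: "0 < prod_list (map rho w)" "prod_list (map rho w) \<le> 1" by auto
  have "rho j * prod_list (map rho w) \<le> rho j * 1" using j IH by (intro mult_left_mono) auto
  then have a: "rho j * prod_list (map rho w) < 1" using j by linarith
  have b: "0 < rho j * prod_list (map rho w)" using j IH by simp
  show ?case using a b by simp
qed

lemma psi_inj:
  assumes "set w \<subseteq> S"
    and "psi_comp beta rho w y = psi_comp beta rho w z"
  shows "y = z"
  using psi_diff[of w y z] prod_rho_bounds[OF assms(1)] assms(2) by simp

lemma psi_fix_unique:
  assumes "set w \<subseteq> S" "w \<noteq> []"
    and "psi_comp beta rho w y = y" "psi_comp beta rho w z = z"
  shows "y = z"
proof -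
  have "y - z = prod_list (map rho w) * (y - z)" using psi_diff[of w y z] assms(3,4) by simp
  then have "(1 - prod_list (map rho w)) * (y - z) = 0" by (simp add: algebra_simps)
  then show ?thesis using prod_rho_bounds[OF assms(1)] assms(2) by simp
qed

lemma psi_fix_exists:
  assumes "set w \<subseteq> S" "w \<noteq> []"
  shows "\<exists>y. psi_comp beta rho w y = y"
proof -
  define P where "P = prod_list (map rho w)"
  have P: "P < 1" using prod_rho_bounds[OF assms(1)] assms(2) unfolding P_def by simp
  define y where "y = psi_comp beta rho w 0 / (1 - P)"
  have "psi_comp beta rho w y - psi_comp beta rho w 0 = P * y" using psi_diff[of w y 0] unfolding P_def by simp
  then have "psi_comp beta rho w y = psi_comp beta rho w 0 + P * y" by simp
  also have "\<dots> = y" unfolding y_def using P by (simp add: field_simps)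
  finally show ?thesis by blast
qed

lemma fixp_eq:
  assumes "set w \<subseteq> S" "w \<noteq> []"
    and "psi_comp beta rho w y = y"
  shows "fixp (psi_comp beta rho w) = y"
  unfolding fixp_def
proof (rule the_equality)
  show "psi_comp beta rho w y = y" by (rule assms(3))
  fix z assume "psi_comp beta rho w z = z"
  show "z = y" using psi_fix_unique[OF assms(1-2) \<open>psi_comp beta rho w z = z\<close> assms(3)] .
qed

lemma fixp_prop:
  assumes "set w \<subseteq> S" "w \<noteq> []"
  shows "psi_comp beta rho w (fixp (psi_comp beta rho w)) = fixp (psi_comp beta rho w)"
  using psi_fix_exists[OF assms] fixp_eq[OF assms] by blast


lemma b_growth: "\<exists>K\<ge>0. AE \<omega> in M. \<exists>C\<ge>0. \<forall>n. \<bar>beta (eps ((T ^^ n) \<omega>))\<bar> \<le> C + real (Suc n) * K"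
proof -
  define K where "K = (\<integral>\<omega>. \<bar>beta (eps \<omega>)\<bar> \<partial>M) + 1"
  have K0: "K \<ge> 0" unfolding K_def by (simp add: integral_nonneg_AE add_nonneg_nonneg)
  define h where "h \<omega> = \<bar>beta (eps \<omega>)\<bar> - K" for \<omega>
  have hi: "integrable M h" unfolding h_def using bint by simp
  have "integral\<^sup>L M h = (\<integral>\<omega>. \<bar>beta (eps \<omega>)\<bar> \<partial>M) - K" unfolding h_def using bint by (simp add: prob_space)
  then have "integral\<^sup>L M h < 0" unfolding K_def by simp
  then have ae: "AE \<omega> in M. \<exists>C. \<forall>n. Sn h n \<omega> \<le> C" using ergodic_bdd[OF hi] by simp
  have "AE \<omega> in M. \<exists>C\<ge>0. \<forall>n. \<bar>beta (eps ((T ^^ n) \<omega>))\<bar> \<le> C + real (Suc n) * K"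
    using ae
  proof (rule AE_mp, intro AE_I2 impI)
    fix \<omega> assume "\<exists>C. \<forall>n. Sn h n \<omega> \<le> C"
    then obtain C where C: "\<And>n. Sn h n \<omega> \<le> C" by blast
    have "\<bar>beta (eps ((T ^^ n) \<omega>))\<bar> \<le> \<bar>C\<bar> + real (Suc n) * K" for n
    proof -
      have "\<bar>beta (eps ((T ^^ n) \<omega>))\<bar> \<le> (\<Sum>k<Suc n. \<bar>beta (eps ((T ^^ k) \<omega>))\<bar>)"
        by (rule member_le_sum) auto
      also have "\<dots> = Sn h (Suc n) \<omega> + real (Suc n) * K"
        unfolding Sn_def h_def by (simp add: sum_subtractf)
      also have "\<dots> \<le> \<bar>C\<bar> + real (Suc n) * K" using C[of "Suc n"] by simp
      finally show ?thesis .
    qed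
    then show "\<exists>C\<ge>0. \<forall>n. \<bar>beta (eps ((T ^^ n) \<omega>))\<bar> \<le> C + real (Suc n) * K"
      by (intro exI[of _ "\<bar>C\<bar>"]) auto
  qed
  then show ?thesis using K0 by blast
qed

lemma rr_nonneg: "\<omega> \<in> space M \<Longrightarrow> 0 \<le> rr n \<omega>"
  unfolding rr_def using rho_pos[OF Tn_space] by (intro prod_nonneg) (auto intro: less_imp_le)

lemma rr_pos: "\<omega> \<in> space M \<Longrightarrow> 0 < rr n \<omega>"
  unfolding rr_def using rho_pos[OF Tn_space] by (intro prod_pos) auto

lemma AE_summable: "AE \<omega> in M. summable (\<lambda>n. tm n \<omega>)"
proof -
  obtain q where q: "0 < q" "q < 1" and ae1: "AE \<omega> in M. \<exists>C. \<forall>n. rr n \<omega> \<le> C * q ^ n"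
    using rr_decay by blast
  obtain K where K: "K \<ge> 0" and ae2: "AE \<omega> in M. \<exists>C\<ge>0. \<forall>n. \<bar>beta (eps ((T ^^ n) \<omega>))\<bar> \<le> C + real (Suc n) * K"
    using b_growth by blast
  have gs: "summable (\<lambda>n. real (Suc n) * q ^ n)"
    using geometric_deriv_sums[of q] q by (auto intro: sums_summable)
  show ?thesis using ae1 ae2 AE_space
  proof (eventually_elim)
    case (elim \<omega>)
    obtain C1 where C1: "\<And>n. rr n \<omega> \<le> C1 * q ^ n" using elim(1) by blast
    obtain C2 where C2: "C2 \<ge> 0" "\<And>n. \<bar>beta (eps ((T ^^ n) \<omega>))\<bar> \<le> C2 + real (Suc n) * K"
      using elim(2) by blast
    have bb: "\<bar>beta (eps ((T ^^ n) \<omega>))\<bar> \<le> (C2 + K) * real (Suc n)" for n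
    proof -
      have "C2 \<le> C2 * real (Suc n)" using C2(1) by (simp add: algebra_simps)
      then show ?thesis using C2(2)[of n] by (simp add: algebra_simps)
    qed
    have "norm (tm n \<omega>) \<le> (C1 * (C2 + K)) * (real (Suc n) * q ^ n)" for n
    proof -
      have "norm (tm n \<omega>) = rr n \<omega> * \<bar>beta (eps ((T ^^ n) \<omega>))\<bar>"
        unfolding tm_def using rr_nonneg[OF elim(3)] by (simp add: abs_mult)
      also have "\<dots> \<le> (C1 * q ^ n) * ((C2 + K) * real (Suc n))"
        using C1[of n] bb[of n] rr_nonneg[OF elim(3), of n] C2(1) K
        by (intro mult_mono) auto
      finally show ?thesis by (simp add: algebra_simps)
    qed
    moreover have "summable (\<lambda>n. (C1 * (C2 + K)) * (real (Suc n) * q ^ n))"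
      using gs by (rule summable_mult)
    ultimately show ?case
      using summable_comparison_test'[where N=0 and g="\<lambda>n. (C1 * (C2 + K)) * (real (Suc n) * q ^ n)" and f="\<lambda>n. tm n \<omega>"]
      by blast
  qed
qed

end

context ifs begin

lemma Tn_Suc_apply: "(T ^^ n) (T \<omega>) = (T ^^ Suc n) \<omega>"
  by (simp add: funpow_Suc_right del: funpow.simps)

lemma Tn_add_apply: "(T ^^ m) ((T ^^ n) \<omega>) = (T ^^ (m + n)) \<omega>"
  by (simp add: funpow_add)

lemma rr_Suc: "rr (Suc n) \<omega> = rho (eps \<omega>) * rr n (T \<omega>)"
  unfolding rr_def by (subst prod.lessThan_Suc_shift) (simp add: Tn_Suc_apply del: funpow.simps)

lemma tm_Suc: "tm (Suc n) \<omega> = rho (eps \<omega>) * tm n (T \<omega>)"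
  unfolding tm_def rr_Suc by (simp add: Tn_Suc_apply del: funpow.simps)

lemma tm_0: "tm 0 \<omega> = beta (eps \<omega>)"
  unfolding tm_def rr_def by simp

lemma summable_T:
  assumes "\<omega> \<in> space M"
  shows "summable (\<lambda>n. tm n (T \<omega>)) \<longleftrightarrow> summable (\<lambda>n. tm n \<omega>)"
proof -
  have "summable (\<lambda>n. tm n \<omega>) \<longleftrightarrow> summable (\<lambda>n. tm (Suc n) \<omega>)"
    by (rule summable_Suc_iff[symmetric])
  also have "\<dots> \<longleftrightarrow> summable (\<lambda>n. rho (eps \<omega>) * tm n (T \<omega>))" by (simp only: tm_Suc)
  also have "\<dots> \<longleftrightarrow> summable (\<lambda>n. tm n (T \<omega>))"
    using rho_pos[OF assms] by (simp only: summable_cmult_iff) simp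
  finally show ?thesis by simp
qed

lemma summable_Tn:
  assumes "\<omega> \<in> space M" "summable (\<lambda>n. tm n \<omega>)"
  shows "summable (\<lambda>k. tm k ((T ^^ n) \<omega>))"
  using assms
proof (induction n arbitrary: \<omega>)
  case 0 then show ?case by simp
next
  case (Suc n)
  have "summable (\<lambda>k. tm k (T \<omega>))" using summable_T[OF Suc.prems(1)] Suc.prems(2) by simp
  then have "summable (\<lambda>k. tm k ((T ^^ n) (T \<omega>)))" using Suc.IH T_space[OF Suc.prems(1)] by blast
  then show ?case by (simp only: Tn_Suc_apply)
qed

lemma XX_rec:
  assumes "\<omega> \<in> space M" "summable (\<lambda>n. tm n \<omega>)"
  shows "XX \<omega> = beta (eps \<omega>) + rho (eps \<omega>) * XX (T \<omega>)"
proof -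
  have sT: "summable (\<lambda>n. tm n (T \<omega>))" using summable_T[OF assms(1)] assms(2) by simp
  have "XX \<omega> = (\<Sum>n. tm (Suc n) \<omega>) + tm 0 \<omega>"
    unfolding XX_def using suminf_split_head[OF assms(2)] by simp
  also have "(\<Sum>n. tm (Suc n) \<omega>) = (\<Sum>n. rho (eps \<omega>) * tm n (T \<omega>))" by (simp only: tm_Suc)
  also have "\<dots> = rho (eps \<omega>) * XX (T \<omega>)" unfolding XX_def using sT by (rule suminf_mult)
  finally show ?thesis by (simp add: tm_0)
qed

definition cw :: "nat \<Rightarrow> 'a \<Rightarrow> 's list" where
  "cw n \<omega> = map (\<lambda>k. eps ((T ^^ k) \<omega>)) [0..<n]"

lemma cw_length[simp]: "length (cw n \<omega>) = n" by (simp add: cw_def)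

lemma cw_nth: "k < n \<Longrightarrow> cw n \<omega> ! k = eps ((T ^^ k) \<omega>)" by (simp add: cw_def)

lemma cw_Suc: "cw (Suc n) \<omega> = eps \<omega> # cw n (T \<omega>)"
  by (rule nth_equalityI) (auto simp: cw_nth nth_Cons Tn_Suc_apply split: nat.splits simp del: funpow.simps)

lemma cw_set: "\<omega> \<in> space M \<Longrightarrow> set (cw n \<omega>) \<subseteq> S"
  by (auto simp: cw_def intro: eps_space Tn_space)

lemma cw_take: "m \<le> n \<Longrightarrow> take m (cw n \<omega>) = cw m \<omega>"
  by (rule nth_equalityI) (auto simp: cw_nth)

lemma cw_add: "cw (m + n) \<omega> = cw m \<omega> @ cw n ((T ^^ m) \<omega>)"
  by (rule nth_equalityI) (auto simp: cw_nth nth_append Tn_add_apply)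

lemma XX_iter:
  assumes "\<omega> \<in> space M" "summable (\<lambda>n. tm n \<omega>)"
  shows "XX \<omega> = psi_comp beta rho (cw n \<omega>) (XX ((T ^^ n) \<omega>))"
  using assms
proof (induction n arbitrary: \<omega>)
  case 0 then show ?case by (simp add: cw_def)
next
  case (Suc n)
  have sp: "T \<omega> \<in> space M" using T_space[OF Suc.prems(1)] .
  have sT: "summable (\<lambda>n. tm n (T \<omega>))" using summable_T[OF Suc.prems(1)] Suc.prems(2) by simp
  have "XX \<omega> = beta (eps \<omega>) + rho (eps \<omega>) * XX (T \<omega>)" using XX_rec[OF Suc.prems] .
  also have "XX (T \<omega>) = psi_comp beta rho (cw n (T \<omega>)) (XX ((T ^^ n) (T \<omega>)))"
    using Suc.IH[OF sp sT] .
  finally show ?case by (simp add: cw_Suc Tn_Suc_apply del: funpow.simps)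
qed

definition cyl :: "'s list \<Rightarrow> 'a set" where
  "cyl w = {\<omega> \<in> space M. \<forall>k < length w. eps ((T ^^ k) \<omega>) = w ! k}"

lemma cyl_sets[measurable]: "cyl w \<in> sets M"
  unfolding cyl_def by measurable

lemma in_cyl_cw: "\<omega> \<in> space M \<Longrightarrow> \<omega> \<in> cyl (cw n \<omega>)"
  by (auto simp: cyl_def cw_nth)

lemma AE_cyl_pos: "AE \<omega> in M. \<forall>m l. measure M (cyl (cw l ((T ^^ m) \<omega>))) > 0"
proof -
  have "AE \<omega> in M. \<forall>w\<in>lists S. (cw (length w) ((T ^^ m) \<omega>) = w \<longrightarrow> measure M (cyl w) > 0)" for m
  proof (subst AE_ball_countable)
    show "countable (lists S)" using cS by simp
    show "\<forall>w\<in>lists S. AE \<omega> in M. cw (length w) ((T ^^ m) \<omega>) = w \<longrightarrow> 0 < measure M (cyl w)"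
    proof
      fix w assume "w \<in> lists S"
      show "AE \<omega> in M. cw (length w) ((T ^^ m) \<omega>) = w \<longrightarrow> 0 < measure M (cyl w)"
      proof (cases "0 < measure M (cyl w)")
        case True then show ?thesis by simp
      next
        case False
        then have z: "measure M (cyl w) = 0" using measure_nonneg[of M "cyl w"] by linarith
        define N where "N = (T ^^ m) -` cyl w \<inter> space M"
        have Ns: "N \<in> sets M" unfolding N_def using measurable_sets[OF Tn_meas cyl_sets] .
        have "measure M N = 0" unfolding N_def using measure_Tn[OF cyl_sets] z by simp
        then have "N \<in> null_sets M" using Ns by (simp add: null_sets_def emeasure_eq_measure)
        then have "AE \<omega> in M. \<omega> \<notin> N" using AE_iff_null_sets[OF Ns] by simp
        then show ?thesis
        proof (rule AE_mp, intro AE_I2 impI)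
          fix \<omega> assume "\<omega> \<in> space M" "\<omega> \<notin> N" "cw (length w) ((T ^^ m) \<omega>) = w"
          then have "(T ^^ m) \<omega> \<in> cyl w" using in_cyl_cw[OF Tn_space, of \<omega> m "length w"] by simp
          then show "0 < measure M (cyl w)" using \<open>\<omega> \<in> space M\<close> \<open>\<omega> \<notin> N\<close> unfolding N_def by simp
        qed
      qed
    qed
  qed
  then have "AE \<omega> in M. \<forall>m. \<forall>w\<in>lists S. (cw (length w) ((T ^^ m) \<omega>) = w \<longrightarrow> measure M (cyl w) > 0)"
    by (subst AE_all_countable) simp
  then show ?thesis
  proof (rule AE_mp, intro AE_I2 impI allI)
    fix \<omega> m l assume sp: "\<omega> \<in> space M"
      and H: "\<forall>m. \<forall>w\<in>lists S. (cw (length w) ((T ^^ m) \<omega>) = w \<longrightarrow> measure M (cyl w) > 0)"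
    have "cw l ((T ^^ m) \<omega>) \<in> lists S" using cw_set[OF Tn_space[OF sp]] by auto
    then show "0 < measure M (cyl (cw l ((T ^^ m) \<omega>)))" using H by auto
  qed
qed

end

context ifs begin

lemma sum_ind_bound:
  assumes "\<And>k. m \<le> k \<Longrightarrow> f k = (0::real)" "\<And>k. 0 \<le> f k \<and> f k \<le> 1"
  shows "(\<Sum>k<n. f k) \<le> real (min n m)"
proof (induction n)
  case 0 then show ?case by simp
next
  case (Suc n)
  show ?case
  proof (cases "n < m")
    case True
    have "(\<Sum>k<Suc n. f k) = (\<Sum>k<n. f k) + f n" by simp
    also have "\<dots> \<le> real (min n m) + 1" using Suc.IH assms(2)[of n] by linarith
    also have "\<dots> = real (min (Suc n) m)" using True by simp
    finally show ?thesis .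
  next
    case False
    have "(\<Sum>k<Suc n. f k) = (\<Sum>k<n. f k)" using assms(1)[of n] False by simp
    also have "\<dots> \<le> real (min n m)" using Suc.IH .
    also have "\<dots> = real (min (Suc n) m)" using False by simp
    finally show ?thesis .
  qed
qed

lemma recurrence:
  assumes A: "A \<in> sets M" and pos: "measure M A > 0"
  shows "AE \<omega> in M. \<forall>m. \<exists>n\<ge>m. (T ^^ n) \<omega> \<in> A"
proof -
  define p where "p = measure M A"
  define h where "h \<omega> = p / 2 - indicator A \<omega>" for \<omega>
  have ii: "integrable M (indicator A :: 'a \<Rightarrow> real)" using A by (intro integrable_real_indicator) (auto simp: emeasure_eq_measure)
  have hi: "integrable M h" unfolding h_def using ii by simp
  have "integral\<^sup>L M h = p / 2 - p" unfolding h_def p_def using ii A by (simp add: prob_space)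
  then have "integral\<^sup>L M h < 0" using pos unfolding p_def by simp
  then have ae: "AE \<omega> in M. \<exists>C. \<forall>n. Sn h n \<omega> \<le> C" using ergodic_bdd[OF hi] by simp
  show ?thesis using ae
  proof (rule AE_mp, intro AE_I2 impI allI)
    fix \<omega> m assume "\<exists>C. \<forall>n. Sn h n \<omega> \<le> C"
    then obtain C where C: "\<And>n. Sn h n \<omega> \<le> C" by blast
    show "\<exists>n\<ge>m. (T ^^ n) \<omega> \<in> A"
    proof (rule ccontr)
      assume "\<not> (\<exists>n\<ge>m. (T ^^ n) \<omega> \<in> A)"
      then have no: "\<And>k. m \<le> k \<Longrightarrow> indicator A ((T ^^ k) \<omega>) = (0::real)" by auto
      obtain n :: nat where n: "(\<bar>C\<bar> + real m) * 2 / p < real n" using reals_Archimedean2 by blast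
      have pp: "0 < p" using pos unfolding p_def .
      have "(\<Sum>k<n. indicator A ((T ^^ k) \<omega>)) \<le> real (min n m)"
        by (rule sum_ind_bound[OF no]) (auto split: split_indicator)
      then have s: "(\<Sum>k<n. indicator A ((T ^^ k) \<omega>) :: real) \<le> real m" by linarith
      have "Sn h n \<omega> = real n * (p / 2) - (\<Sum>k<n. indicator A ((T ^^ k) \<omega>))"
        unfolding Sn_def h_def by (simp add: sum_subtractf)
      moreover have "real n * (p / 2) > \<bar>C\<bar> + real m"
        using n pp by (simp add: field_simps)
      ultimately have "Sn h n \<omega> > C" using s by linarith
      then show False using C[of n] by simp
    qed
  qed
qed

lemma good_shift:
  assumes "\<omega> \<in> space M" "summable (\<lambda>n. tm n \<omega>)" "\<forall>m l. measure M (cyl (cw l ((T ^^ m) \<omega>))) > 0"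
  shows "(T ^^ n) \<omega> \<in> space M \<and> summable (\<lambda>k. tm k ((T ^^ n) \<omega>)) \<and>
     (\<forall>m l. measure M (cyl (cw l ((T ^^ m) ((T ^^ n) \<omega>)))) > 0)"
  using Tn_space[OF assms(1)] summable_Tn[OF assms(1,2)] assms(3) by (simp add: Tn_add_apply)

end

context ifs begin

definition good :: "'a \<Rightarrow> bool" where
  "good \<omega> \<longleftrightarrow> \<omega> \<in> space M \<and> summable (\<lambda>n. tm n \<omega>) \<and> (\<forall>m l. measure M (cyl (cw l ((T ^^ m) \<omega>))) > 0)"

lemma AE_good: "AE \<omega> in M. good \<omega>"
  using AE_space AE_summable AE_cyl_pos unfolding good_def by eventually_elim blast

lemma good_Tn: "good \<omega> \<Longrightarrow> good ((T ^^ n) \<omega>)"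
  unfolding good_def using good_shift by blast

lemma good_iter: "good \<omega> \<Longrightarrow> XX \<omega> = psi_comp beta rho (cw n \<omega>) (XX ((T ^^ n) \<omega>))"
  unfolding good_def using XX_iter by blast

lemma good_minword:
  assumes g: "good \<omega>" and x0: "XX \<omega> = x" and xn: "XX ((T ^^ n) \<omega>) = x" and n: "1 \<le> n"
  shows "\<exists>m0. 1 \<le> m0 \<and> m0 \<le> n \<and> minimal_idx M T eps S beta rho (cw m0 \<omega>)
           \<and> fixp (psi_comp beta rho (cw m0 \<omega>)) = x"
proof -
  have sp: "\<omega> \<in> space M" using g unfolding good_def by blast
  have cylpos: "\<And>l. measure M (cyl (cw l \<omega>)) > 0" using g unfolding good_def by (metis funpow_0)
  have "XX \<omega> = psi_comp beta rho (cw n \<omega>) x" using good_iter[OF g, of n] xn by simp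
  then have "psi_comp beta rho (cw n \<omega>) x = x" using x0 by simp
  moreover have ne: "\<And>m. 1 \<le> m \<Longrightarrow> cw m \<omega> \<noteq> []"
    by (metis cw_length le_numeral_extra(2) list.size(3))
  ultimately have Pn: "1 \<le> n \<and> fixp (psi_comp beta rho (cw n \<omega>)) = x"
    using fixp_eq[OF cw_set[OF sp] ne[OF n]] n by blast
  define P where "P m \<longleftrightarrow> 1 \<le> m \<and> fixp (psi_comp beta rho (cw m \<omega>)) = x" for m
  define m0 where "m0 = (LEAST m. P m)"
  have Pm0: "P m0" unfolding m0_def using Pn P_def by (metis LeastI)
  have m0n: "m0 \<le> n" unfolding m0_def using Pn P_def by (metis Least_le)
  have notP: "\<And>m. m < m0 \<Longrightarrow> \<not> P m" unfolding m0_def by (rule not_less_Least)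
  have "minimal_idx M T eps S beta rho (cw m0 \<omega>)"
    unfolding minimal_idx_def
  proof (intro conjI allI impI)
    show "1 \<le> length (cw m0 \<omega>)" using Pm0 P_def by simp
    show "set (cw m0 \<omega>) \<subseteq> S" using cw_set[OF sp] .
    show "0 < measure M {\<omega>' \<in> space M. \<forall>k<length (cw m0 \<omega>). eps ((T ^^ k) \<omega>') = cw m0 \<omega> ! k}"
      using cylpos[of m0] unfolding cyl_def .
    fix m assume m: "1 \<le> m \<and> m < length (cw m0 \<omega>)"
    then have "take m (cw m0 \<omega>) = cw m \<omega>" by (intro cw_take) simp
    then show "fixp (psi_comp beta rho (take m (cw m0 \<omega>))) \<noteq> fixp (psi_comp beta rho (cw m0 \<omega>))"
      using notP[of m] m Pm0 unfolding P_def by simp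
  qed
  then show ?thesis using Pm0 m0n unfolding P_def by blast
qed

end

context ifs begin

lemma cycle_word:
  assumes inj: "inj_on (\<lambda>i. fixp (psi_comp beta rho i)) {i. minimal_idx M T eps S beta rho i}"
    and u: "minimal_idx M T eps S beta rho u" "fixp (psi_comp beta rho u) = x"
  shows "good \<omega> \<Longrightarrow> XX \<omega> = x \<Longrightarrow> XX ((T ^^ n) \<omega>) = x \<Longrightarrow> 1 \<le> n \<Longrightarrow>
     \<forall>k<n. eps ((T ^^ k) \<omega>) = u ! (k mod length u)"
proof (induction n arbitrary: \<omega> rule: less_induct)
  case (less n \<omega>)
  define N where "N = length u"
  have uS: "set u \<subseteq> S" and N1: "1 \<le> N" using u(1) unfolding minimal_idx_def N_def by auto
  have une: "u \<noteq> []" using N1 N_def by auto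
  obtain m0 where m0: "1 \<le> m0" "m0 \<le> n" "minimal_idx M T eps S beta rho (cw m0 \<omega>)"
    "fixp (psi_comp beta rho (cw m0 \<omega>)) = x"
    using good_minword[OF less.prems] by blast
  have cweq: "cw m0 \<omega> = u"
    using inj_onD[OF inj, of "cw m0 \<omega>" u] m0(3,4) u by simp
  then have m0N: "m0 = N" unfolding N_def by (metis cw_length)
  have sp: "\<omega> \<in> space M" using less.prems(1) unfolding good_def by blast
  have "psi_comp beta rho u (XX ((T ^^ N) \<omega>)) = x"
    using good_iter[OF less.prems(1), of N] cweq m0N less.prems(2) by simp
  moreover have "psi_comp beta rho u x = x" using fixp_prop[OF uS une] u(2) by simp
  ultimately have xN: "XX ((T ^^ N) \<omega>) = x" using psi_inj[OF uS] by metis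
  show ?case
  proof (intro allI impI)
    fix k assume kn: "k < n"
    show "eps ((T ^^ k) \<omega>) = u ! (k mod length u)"
    proof (cases "k < N")
      case True
      then have "eps ((T ^^ k) \<omega>) = cw N \<omega> ! k" by (simp add: cw_nth)
      then show ?thesis using True cweq m0N N_def by simp
    next
      case False
      then have Nn: "N < n" using kn by simp
      have g2: "good ((T ^^ N) \<omega>)" using good_Tn[OF less.prems(1)] .
      have x2: "XX ((T ^^ (n - N)) ((T ^^ N) \<omega>)) = x"
        using less.prems(3) Nn by (simp add: Tn_add_apply)
      have IH: "\<forall>k<n - N. eps ((T ^^ k) ((T ^^ N) \<omega>)) = u ! (k mod length u)"
        using less.IH[of "n - N" "(T ^^ N) \<omega>"] g2 xN x2 Nn N1 by simp
      have "eps ((T ^^ k) \<omega>) = eps ((T ^^ (k - N)) ((T ^^ N) \<omega>))"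
        using False by (simp add: Tn_add_apply)
      also have "\<dots> = u ! ((k - N) mod length u)" using IH kn False by simp
      also have "(k - N) mod length u = k mod length u"
        using False N_def by (simp add: le_mod_geq)
      finally show ?thesis .
    qed
  qed
qed

lemma atom_periodic:
  assumes inj: "inj_on (\<lambda>i. fixp (psi_comp beta rho i)) {i. minimal_idx M T eps S beta rho i}"
    and x: "measure M {\<omega> \<in> space M. XX \<omega> = x} > 0"
  shows "\<exists>N u. periodic_coding M T eps S N u"
proof -
  define Ax where "Ax = {\<omega> \<in> space M. XX \<omega> = x}"
  have Axs: "Ax \<in> sets M" unfolding Ax_def by measurable
  have rec: "AE \<omega> in M. \<forall>m. \<exists>n\<ge>m. (T ^^ n) \<omega> \<in> Ax"
    using recurrence[OF Axs] x unfolding Ax_def by simp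
  have ae: "AE \<omega> in M. good \<omega> \<and> (\<forall>m. \<exists>n\<ge>m. (T ^^ n) \<omega> \<in> Ax)"
    using rec AE_good by eventually_elim blast
  have "\<exists>\<omega>\<in>Ax. good \<omega> \<and> (\<forall>m. \<exists>n\<ge>m. (T ^^ n) \<omega> \<in> Ax)"
  proof (rule ccontr)
    assume "\<not> ?thesis"
    then have H: "\<And>\<omega>. \<omega> \<in> Ax \<Longrightarrow> good \<omega> \<Longrightarrow> (\<forall>m. \<exists>n\<ge>m. (T ^^ n) \<omega> \<in> Ax) \<Longrightarrow> False" by blast
    have "AE \<omega> in M. \<omega> \<notin> Ax" using ae by eventually_elim (use H in blast)
    then have "Ax \<in> null_sets M" using AE_iff_null_sets[OF Axs] by simp
    then show False using x unfolding Ax_def by (simp add: null_sets_def emeasure_eq_measure)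
  qed
  then obtain \<omega>0 where w0: "\<omega>0 \<in> Ax" "good \<omega>0" "\<forall>m. \<exists>n\<ge>m. (T ^^ n) \<omega>0 \<in> Ax" by blast
  obtain n0 where n0: "n0 \<ge> 1" "(T ^^ n0) \<omega>0 \<in> Ax" using w0(3) by blast
  obtain m0 where m0: "1 \<le> m0" "minimal_idx M T eps S beta rho (cw m0 \<omega>0)"
    "fixp (psi_comp beta rho (cw m0 \<omega>0)) = x"
    using good_minword[OF w0(2), of x n0] w0(1) n0 unfolding Ax_def by auto
  define u where "u = cw m0 \<omega>0"
  define N where "N = length u"
  have u: "minimal_idx M T eps S beta rho u" "fixp (psi_comp beta rho u) = x"
    using m0 unfolding u_def by auto
  have uS: "set u \<subseteq> S" and N1: "1 \<le> N" using u(1) unfolding minimal_idx_def N_def by auto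
  note cyc = cycle_word[OF inj u]
  define A where "A = {\<omega> \<in> space M. \<exists>k. \<forall>n. eps ((T ^^ n) \<omega>) = u ! ((n + k) mod N)}"
  have As: "A \<in> sets M" unfolding A_def by measurable
  have inA: "\<omega> \<in> A" if g: "good \<omega>" and xw: "XX \<omega> = x" and r: "\<forall>m. \<exists>n\<ge>m. (T ^^ n) \<omega> \<in> Ax" for \<omega>
  proof -
    have "eps ((T ^^ k) \<omega>) = u ! ((k + 0) mod N)" for k
    proof -
      obtain n where n: "n \<ge> Suc k" "(T ^^ n) \<omega> \<in> Ax" using r by blast
      then have "XX ((T ^^ n) \<omega>) = x" unfolding Ax_def by simp
      then show ?thesis using cyc[OF g xw] n N_def by simp
    qed
    then show ?thesis using g unfolding A_def good_def by blast
  qed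
  have aeA': "AE \<omega> in M. \<omega> \<in> (\<Union>m. (T ^^ m) -` A \<inter> space M)"
    using ae
  proof (rule AE_mp, intro AE_I2 impI)
    fix \<omega> assume sp: "\<omega> \<in> space M" and H: "good \<omega> \<and> (\<forall>m. \<exists>n\<ge>m. (T ^^ n) \<omega> \<in> Ax)"
    obtain n1 where n1: "(T ^^ n1) \<omega> \<in> Ax" using H by blast
    have r: "\<forall>m. \<exists>n\<ge>m. (T ^^ n) ((T ^^ n1) \<omega>) \<in> Ax"
    proof
      fix m
      obtain n where n: "n \<ge> m + n1" "(T ^^ n) \<omega> \<in> Ax" using H by blast
      then have "(T ^^ (n - n1)) ((T ^^ n1) \<omega>) \<in> Ax" by (simp add: Tn_add_apply)
      then show "\<exists>n\<ge>m. (T ^^ n) ((T ^^ n1) \<omega>) \<in> Ax" using n(1) by (intro exI[of _ "n - n1"]) simp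
    qed
    have "(T ^^ n1) \<omega> \<in> A"
      using inA[OF good_Tn[of \<omega> n1] _ r] H n1 unfolding Ax_def by simp
    then show "\<omega> \<in> (\<Union>m. (T ^^ m) -` A \<inter> space M)" using sp by blast
  qed
  define B where "B m = (T ^^ m) -` A \<inter> space M" for m
  have Bs: "range B \<subseteq> sets M" unfolding B_def using measurable_sets[OF Tn_meas As] by blast
  have Binc: "incseq B"
  proof (rule incseq_SucI)
    fix m show "B m \<subseteq> B (Suc m)"
    proof
      fix \<omega> assume "\<omega> \<in> B m"
      then have sp: "\<omega> \<in> space M" and a: "(T ^^ m) \<omega> \<in> A" unfolding B_def by auto
      then obtain k where k: "\<And>n. eps ((T ^^ n) ((T ^^ m) \<omega>)) = u ! ((n + k) mod N)" unfolding A_def by blast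
      have "eps ((T ^^ n) ((T ^^ Suc m) \<omega>)) = u ! ((n + Suc k) mod N)" for n
        using k[of "Suc n"] by (simp add: Tn_add_apply del: funpow.simps)
      moreover have "(T ^^ Suc m) \<omega> \<in> space M" using Tn_space[OF sp] .
      ultimately show "\<omega> \<in> B (Suc m)" unfolding B_def A_def using sp by blast
    qed
  qed
  have "(\<lambda>m. measure M (B m)) \<longlonglongrightarrow> measure M (\<Union>m. B m)"
    by (rule finite_Lim_measure_incseq[OF Bs Binc])
  moreover have "\<And>m. measure M (B m) = measure M A" unfolding B_def using measure_Tn[OF As] by simp
  ultimately have "measure M A = measure M (\<Union>m. B m)" by (simp add: LIMSEQ_const_iff)
  moreover have "measure M (\<Union>m. B m) = 1"
  proof -
    have U: "(\<Union>m. B m) = {\<omega> \<in> space M. \<omega> \<in> (\<Union>m. B m)}" unfolding B_def by blast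
    have "(\<Union>m. B m) \<in> sets M" using Bs by blast
    then show ?thesis using prob_Collect_eq_1[of "\<lambda>\<omega>. \<omega> \<in> (\<Union>m. B m)"] aeA' U unfolding B_def by simp
  qed
  ultimately have "measure M A = 1" by simp
  then have "AE \<omega> in M. \<omega> \<in> A" by (rule AE_prob_1)
  then have "AE \<omega> in M. \<exists>k. \<forall>n. eps ((T ^^ n) \<omega>) = u ! ((n + k) mod N)"
    by (rule AE_mp) (auto simp: A_def intro!: AE_I2)
  then have "periodic_coding M T eps S N u"
    unfolding periodic_coding_def using N1 uS N_def by simp
  then show ?thesis by blast
qed

end

context ifs begin

lemma rot_cw:
  assumes N: "length is = N" "1 \<le> N" and sh: "\<And>n. eps ((T ^^ n) \<omega>) = is ! ((n + k) mod N)"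
  shows "cw N \<omega> = drop (k mod N) is @ take (k mod N) is"
proof (rule nth_equalityI)
  have kN: "k mod N < N" using N by simp
  show "length (cw N \<omega>) = length (drop (k mod N) is @ take (k mod N) is)" using N kN by simp
  fix n assume "n < length (cw N \<omega>)"
  then have n: "n < N" by simp
  have "cw N \<omega> ! n = is ! ((n + k) mod N)" using n sh by (simp add: cw_nth)
  also have "(n + k) mod N = (n + k mod N) mod N" by (simp add: mod_add_right_eq)
  finally have L: "cw N \<omega> ! n = is ! ((n + k mod N) mod N)" .
  show "cw N \<omega> ! n = (drop (k mod N) is @ take (k mod N) is) ! n"
  proof (cases "n < N - k mod N")
    case True
    then have "(n + k mod N) mod N = n + k mod N" by simp
    then show ?thesis using L True N kN by (simp add: nth_append add.commute)
  next
    case False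
    have lt: "n + k mod N - N < N" using n kN by linarith
    have ge: "N \<le> n + k mod N" using False by linarith
    have "(n + k mod N) mod N = (n + k mod N - N) mod N" using ge by (simp add: le_mod_geq)
    also have "\<dots> = n + k mod N - N" using lt by simp
    also have "\<dots> = n - (N - k mod N)" using ge kN by linarith
    finally have e: "(n + k mod N) mod N = n - (N - k mod N)" .
    have lt2: "n - (N - k mod N) < k mod N" using n False kN by linarith
    show ?thesis using L False N kN e lt2 by (simp add: nth_append)
  qed
qed

lemma periodic_value:
  assumes N: "length is = N" "1 \<le> N" "set is \<subseteq> S" and g: "good \<omega>"
    and sh: "\<And>n. eps ((T ^^ n) \<omega>) = is ! ((n + k) mod N)"
  shows "XX \<omega> = psi_comp beta rho (drop (k mod N) is) (fixp (psi_comp beta rho is))"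
proof -
  define d where "d = drop (k mod N) is"
  define t where "t = take (k mod N) is"
  define c where "c = fixp (psi_comp beta rho is)"
  have ine: "is \<noteq> []" using N by auto
  have isdt: "is = t @ d" unfolding t_def d_def by simp
  have cw: "cw N \<omega> = d @ t" unfolding d_def t_def using rot_cw[OF N(1,2) sh] .
  have per: "eps ((T ^^ j) ((T ^^ N) \<omega>)) = eps ((T ^^ j) \<omega>)" for j
  proof -
    have "eps ((T ^^ j) ((T ^^ N) \<omega>)) = is ! ((j + N + k) mod N)" using sh[of "j + N"] by (simp add: Tn_add_apply)
    also have "(j + N + k) mod N = (j + k) mod N" by (simp add: add.commute add.left_commute)
    finally show ?thesis using sh[of j] by simp
  qed
  have "XX ((T ^^ N) \<omega>) = XX \<omega>" unfolding XX_def tm_def rr_def by (simp only: per)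
  then have fx: "psi_comp beta rho (d @ t) (XX \<omega>) = XX \<omega>" using good_iter[OF g, of N] cw by simp
  have dtS: "set (d @ t) \<subseteq> S" using N(3) isdt by auto
  have dtne: "d @ t \<noteq> []" using ine isdt by auto
  have f1: "fixp (psi_comp beta rho (d @ t)) = XX \<omega>" using fixp_eq[OF dtS dtne fx] .
  have "psi_comp beta rho is c = c" unfolding c_def using fixp_prop[OF N(3) ine] .
  then have "psi_comp beta rho (d @ t) (psi_comp beta rho d c) = psi_comp beta rho d c"
    using isdt by (simp add: psi_append)
  then have "fixp (psi_comp beta rho (d @ t)) = psi_comp beta rho d c" using fixp_eq[OF dtS dtne] by blast
  then show ?thesis using f1 unfolding d_def c_def by simp
qed

lemma mod_hit:
  fixes N k0 k :: nat
  assumes "1 \<le> N" "k < N"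
  shows "(N - k0 mod N + k + k0) mod N = k"
proof -
  have r: "k0 mod N < N" using assms by simp
  define q where "q = k0 div N"
  define r where "r = k0 mod N"
  have k0: "k0 = q * N + r" unfolding q_def r_def by simp
  have rN: "r < N" using r unfolding r_def .
  have "N - k0 mod N + k + k0 = N - r + k + (q * N + r)" using k0 r_def by simp
  also have "\<dots> = k + (q * N + N)" using rN by linarith
  also have "\<dots> = k + (Suc q) * N" by simp
  finally have e: "N - k0 mod N + k + k0 = k + (Suc q) * N" .
  have "(N - k0 mod N + k + k0) mod N = (k + (Suc q) * N) mod N" by (simp only: e)
  also have "\<dots> = k mod N" by (rule mod_mult_self1)
  also have "\<dots> = k" using assms by simp
  finally show ?thesis .
qed

lemma periodic_image:
  assumes pc: "periodic_coding M T eps S N is"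
  shows "\<exists>Z \<in> null_sets M. XX ` (space M - Z) =
           {psi_comp beta rho (drop k is) (fixp (psi_comp beta rho is)) | k. k < N}"
proof -
  have N: "1 \<le> N" "length is = N" "set is \<subseteq> S"
    and ae: "AE \<omega> in M. \<exists>k. \<forall>n. eps ((T ^^ n) \<omega>) = is ! ((n + k) mod N)"
    using pc unfolding periodic_coding_def by auto
  define Q where "Q \<omega> \<longleftrightarrow> good \<omega> \<and> (\<exists>k. \<forall>n. eps ((T ^^ n) \<omega>) = is ! ((n + k) mod N))" for \<omega>
  have "AE \<omega> in M. Q \<omega>" using ae AE_good unfolding Q_def by eventually_elim blast
  then obtain N0 where N0: "{\<omega> \<in> space M. \<not> Q \<omega>} \<subseteq> N0" "emeasure M N0 = 0" "N0 \<in> sets M"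
    by (rule AE_E)
  define Z where "Z = (\<Union>m. (T ^^ m) -` N0 \<inter> space M)"
  have Zn: "Z \<in> null_sets M" unfolding Z_def
  proof (rule null_sets_UN)
    fix m
    have s: "(T ^^ m) -` N0 \<inter> space M \<in> sets M" using measurable_sets[OF Tn_meas N0(3)] .
    have "measure M ((T ^^ m) -` N0 \<inter> space M) = 0" using measure_Tn[OF N0(3)] N0(2)
      by (simp add: emeasure_eq_measure)
    then show "(T ^^ m) -` N0 \<inter> space M \<in> null_sets M" using s by (simp add: null_sets_def emeasure_eq_measure)
  qed
  have QZ: "Q ((T ^^ m) \<omega>)" if "\<omega> \<in> space M - Z" for \<omega> m
    using that Tn_space[of \<omega> m] N0(1) unfolding Z_def by blast
  have val: "XX \<omega> = psi_comp beta rho (drop (k mod N) is) (fixp (psi_comp beta rho is))"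
    if "good \<omega>" "\<And>n. eps ((T ^^ n) \<omega>) = is ! ((n + k) mod N)" for \<omega> k
    using periodic_value[OF N(2,1,3) that] .
  show ?thesis
  proof (intro bexI[OF _ Zn] equalityI subsetI)
    fix y assume "y \<in> XX ` (space M - Z)"
    then obtain \<omega> where w: "\<omega> \<in> space M - Z" "y = XX \<omega>" by blast
    have "Q \<omega>" using QZ[OF w(1), of 0] by simp
    then obtain k where g: "good \<omega>" "\<And>n. eps ((T ^^ n) \<omega>) = is ! ((n + k) mod N)" unfolding Q_def by blast
    have "k mod N < N" using N by simp
    then show "y \<in> {psi_comp beta rho (drop k is) (fixp (psi_comp beta rho is)) | k. k < N}"
      using val[OF g] w(2) by blast
  next
    fix y assume "y \<in> {psi_comp beta rho (drop k is) (fixp (psi_comp beta rho is)) | k. k < N}"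
    then obtain k where k: "k < N" "y = psi_comp beta rho (drop k is) (fixp (psi_comp beta rho is))" by blast
    have "space M - Z \<noteq> {}"
    proof
      assume "space M - Z = {}"
      then have "space M \<subseteq> Z" by blast
      moreover have "Z \<subseteq> space M" unfolding Z_def by blast
      ultimately have "Z = space M" by blast
      then show False using Zn prob_space by (simp add: null_sets_def emeasure_eq_measure)
    qed
    then obtain \<omega>0 where w0: "\<omega>0 \<in> space M - Z" by blast
    then obtain k0 where k0: "\<And>n. eps ((T ^^ n) \<omega>0) = is ! ((n + k0) mod N)"
      using QZ[OF w0, of 0] unfolding Q_def by auto
    define m where "m = N - k0 mod N + k"
    define \<omega> where "\<omega> = (T ^^ m) \<omega>0"
    have wZ: "\<omega> \<in> space M - Z"
    proof -
      have "\<omega> \<in> space M" unfolding \<omega>_def using w0 Tn_space by blast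
      moreover have "\<omega> \<notin> Z"
      proof
        assume "\<omega> \<in> Z"
        then obtain m' where "(T ^^ m') \<omega> \<in> N0" unfolding Z_def by blast
        then have "(T ^^ (m' + m)) \<omega>0 \<in> N0" unfolding \<omega>_def by (simp add: Tn_add_apply)
        then show False using w0 Tn_space[of \<omega>0 "m' + m"] unfolding Z_def by blast
      qed
      ultimately show ?thesis by blast
    qed
    have gw: "good \<omega>" using QZ[OF wZ, of 0] unfolding Q_def by simp
    have sh: "eps ((T ^^ n) \<omega>) = is ! ((n + (m + k0)) mod N)" for n
      using k0[of "n + m"] unfolding \<omega>_def by (simp add: Tn_add_apply add.assoc)
    have "(m + k0) mod N = k" unfolding m_def using mod_hit[OF N(1) k(1)] by simp
    then have "XX \<omega> = y" using val[OF gw sh] k(2) by simp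
    then show "y \<in> XX ` (space M - Z)" using wZ by blast
  qed
qed

end


theorem mainTheorem4:
  fixes M :: "'a measure" and T :: "'a \<Rightarrow> 'a" and S :: "'s set"
    and beta rho :: "'s \<Rightarrow> real" and eps :: "'a \<Rightarrow> 's"
    and b r :: "'a \<Rightarrow> real" and rn :: "nat \<Rightarrow> 'a \<Rightarrow> real" and X :: "'a \<Rightarrow> real"
  assumes "prob_space M"
    and "invertible_mpt M T"
    and "ergodic M T"
    and "countable S"
    and "\<And>j. j \<in> S \<Longrightarrow> 0 < rho j \<and> rho j < 1"
    and "eps \<in> measurable M (count_space S)"
    and "\<And>j. j \<in> S \<Longrightarrow> measure M {\<omega> \<in> space M. eps \<omega> = j} > 0"
    and "b = (\<lambda>\<omega>. beta (eps \<omega>))"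
    and "r = (\<lambda>\<omega>. rho (eps \<omega>))"
    and "integrable M b"
    and "integrable M (\<lambda>\<omega>. ln (r \<omega>))"
    and "rn = (\<lambda>n \<omega>. \<Prod>k<n. r ((T ^^ k) \<omega>))"
    and "X = (\<lambda>\<omega>. \<Sum>n. rn n \<omega> * b ((T ^^ n) \<omega>))"
    and "inj_on (\<lambda>i. fixp (psi_comp beta rho i)) {i. minimal_idx M T eps S beta rho i}"
  shows "((\<forall>x. measure (distr M lborel X) {x} = 0)
           \<or> (\<exists>N is. periodic_coding M T eps S N is))
         \<and> (\<forall>N is. periodic_coding M T eps S N is \<longrightarrow>
              (\<exists>Z \<in> null_sets M.
                 X ` (space M - Z) =
                   {psi_comp beta rho (drop k is) (fixp (psi_comp beta rho is)) | k. k < N}))"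
proof -
  have Tm: "T \<in> M \<rightarrow>\<^sub>M M" and Td: "distr M M T = M"
    using assms(2) unfolding invertible_mpt_def by auto
  have bi: "integrable M (\<lambda>\<omega>. beta (eps \<omega>))" using assms(8,10) by simp
  have li: "integrable M (\<lambda>\<omega>. ln (rho (eps \<omega>)))" using assms(9,11) by simp
  interpret I: ifs M T S beta rho eps
    by (rule ifs.intro[OF assms(1) Tm Td assms(3,4,5,6) bi li])
  have XE: "X = I.XX"
    unfolding I.XX_def[abs_def] I.tm_def[abs_def] I.rr_def[abs_def] using assms(8,9,12,13) by simp
  have first: "(\<forall>x. measure (distr M lborel X) {x} = 0) \<or> (\<exists>N is. periodic_coding M T eps S N is)"
  proof (cases "\<forall>x. measure (distr M lborel X) {x} = 0")
    case True then show ?thesis by blast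
  next
    case False
    then obtain x where x: "measure (distr M lborel X) {x} \<noteq> 0" by blast
    have Xm: "X \<in> M \<rightarrow>\<^sub>M lborel" using I.XX_meas XE by simp
    have "measure (distr M lborel X) {x} = measure M (X -` {x} \<inter> space M)"
      by (rule measure_distr[OF Xm]) simp
    also have "X -` {x} \<inter> space M = {\<omega> \<in> space M. I.XX \<omega> = x}" using XE by auto
    finally have "measure M {\<omega> \<in> space M. I.XX \<omega> = x} > 0"
      using x measure_nonneg[of M "{\<omega> \<in> space M. I.XX \<omega> = x}"] by linarith
    then show ?thesis using I.atom_periodic[OF assms(14)] by blast
  qed
  have second: "\<forall>N is. periodic_coding M T eps S N is \<longrightarrow>
              (\<exists>Z \<in> null_sets M.
                 X ` (space M - Z) =
                   {psi_comp beta rho (drop k is) (fixp (psi_comp beta rho is)) | k. k < N})"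
    using I.periodic_image XE by simp
  show ?thesis using first second by blast
qed


end
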